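(* In $Q_n$, each of the sets $\{x_{\emptyset,k}: k=1,\dots,n\}$ and $\{x_{\{1,\dots,n\}\setminus\{k\},k}: k=1,\dots,n\}$ is a sufficient set, i.e. its $du$-envelope contains a defining set of pseudo-roots of $\mathcal P(t)$.
   Context: Fix a field $k$. $Q_n$ is the associative unital $k$-algebra with generators $x_{A,i}$ ($A\subseteq\{1,\dots,n\}$, $i\notin A$), called pseudo-roots, subject to $x_{A\cup\{i\},j}+x_{A,i}=x_{A\cup\{j\},i}+x_{A,j}$ and $x_{A\cup\{i\},j}\,x_{A,i}=x_{A\cup\{j\},i}\,x_{A,j}$ for all $A$ and $i\ne j$, $i,j\notin A$. With $t$ central, $\mathcal P(t)=(t-x_{A_n,i_n})\cdots(t-x_{A_1,i_1})$ for an ordering $(i_1,\dots,i_n)$ of $\{1,\dots,n\}$ and $A_k=\{i_1,\dots,i_{k-1}\}$ (independent of the ordering). A set $Y$ of pseudo-roots is defining if $\mathcal P(t)=(t-y_n)\cdots(t-y_1)$ with all $y_k\in Y$. The pseudo-root $x_{A,i}$ corresponds to an edge with tail $A\cup\{i\}$ and head $A$. For distinct pseudo-roots $x_{A,i},x_{B,j}$ with $A=B$ (common head), $\xi$ is obtained from the ordered pair by the $u$-operation if $(x_{A,i}-x_{B,j})x_{A,i}=\xi(x_{A,i}-x_{B,j})$; for distinct pseudo-roots with $A\cup\{i\}=B\cup\{j\}$ (common tail), $\eta$ is obtained by the $d$-operation if $(x_{A,i}-x_{B,j})\eta=x_{A,i}(x_{A,i}-x_{B,j})$. The $du$-envelope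 of a set $Z$ of pseudo-roots is the set of pseudo-roots obtained from $Z$ by successive $d$- and $u$-operations; $Z$ is sufficient if its $du$-envelope contains a defining set. *)

theory Defs
  imports Main
begin

text \<open>Noncommutative polynomials over a field 'k in generators 'g: functions from
  words (lists of generators) to 'k (only finitely supported ones are ever built).\<close>

type_synonym ('g, 'k) ncp = "'g list \<Rightarrow> 'k"

definition ncadd :: "('g,'k::field) ncp \<Rightarrow> ('g,'k) ncp \<Rightarrow> ('g,'k) ncp" where
  "ncadd p q = (\<lambda>w. p w + q w)"

definition ncsub :: "('g,'k::field) ncp \<Rightarrow> ('g,'k) ncp \<Rightarrow> ('g,'k) ncp" where
  "ncsub p q = (\<lambda>w. p w - q w)"

definition ncsmul :: "'k::field \<Rightarrow> ('g,'k) ncp \<Rightarrow> ('g,'k) ncp" where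
  "ncsmul c p = (\<lambda>w. c * p w)"

definition ncmul :: "('g,'k::field) ncp \<Rightarrow> ('g,'k) ncp \<Rightarrow> ('g,'k) ncp" where
  "ncmul p q = (\<lambda>w. \<Sum>i\<le>length w. p (take i w) * q (drop i w))"

definition ncword :: "'g list \<Rightarrow> ('g,'k::field) ncp" where
  "ncword u = (\<lambda>w. if w = u then 1 else 0)"

definition ncgen :: "'g \<Rightarrow> ('g,'k::field) ncp" where
  "ncgen g = ncword [g]"

definition ncone :: "('g,'k::field) ncp" where
  "ncone = ncword []"

definition ncprod :: "('g,'k::field) ncp list \<Rightarrow> ('g,'k) ncp" where
  "ncprod ps = foldr ncmul ps ncone"

inductive_set ncideal :: "('g,'k::field) ncp set \<Rightarrow> ('g,'k) ncp set" for R where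
  gen: "r \<in> R \<Longrightarrow> r \<in> ncideal R"
| zero: "(\<lambda>w. 0) \<in> ncideal R"
| add: "p \<in> ncideal R \<Longrightarrow> q \<in> ncideal R \<Longrightarrow> ncadd p q \<in> ncideal R"
| smul: "p \<in> ncideal R \<Longrightarrow> ncsmul c p \<in> ncideal R"
| mult: "p \<in> ncideal R \<Longrightarrow> ncmul (ncmul (ncword u) p) (ncword v) \<in> ncideal R"

text \<open>Generators: Some (A,i) is the pseudo-root x_{A,i}; None is the central variable t.
  The algebra Q_n[t] = Q_n \<otimes> k[t] is the free algebra on these generators modulo the
  ideal generated by the defining relations of Q_n and the commutators [t, x_{A,i}].\<close>

type_synonym pr = "nat set \<times> nat"

definition pseudo_root :: "nat \<Rightarrow> pr \<Rightarrow> bool" where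
  "pseudo_root n p \<longleftrightarrow> fst p \<subseteq> {1..n} \<and> snd p \<in> {1..n} \<and> snd p \<notin> fst p"

definition xr :: "pr \<Rightarrow> (pr option, 'k::field) ncp" where
  "xr p = ncgen (Some p)"

definition tvar :: "(pr option, 'k::field) ncp" where
  "tvar = ncgen None"

definition Qrels :: "nat \<Rightarrow> (pr option, 'k::field) ncp set" where
  "Qrels n =
     {ncsub (ncadd (xr (insert i A, j)) (xr (A, i))) (ncadd (xr (insert j A, i)) (xr (A, j))) | A i j.
        A \<subseteq> {1..n} \<and> i \<in> {1..n} \<and> j \<in> {1..n} \<and> i \<noteq> j \<and> i \<notin> A \<and> j \<notin> A}
   \<union> {ncsub (ncmul (xr (insert i A, j)) (xr (A, i))) (ncmul (xr (insert j A, i)) (xr (A, j))) | A i j.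
        A \<subseteq> {1..n} \<and> i \<in> {1..n} \<and> j \<in> {1..n} \<and> i \<noteq> j \<and> i \<notin> A \<and> j \<notin> A}
   \<union> {ncsub (ncmul tvar (xr p)) (ncmul (xr p) tvar) | p. pseudo_root n p}"

definition Qeq :: "'k::field itself \<Rightarrow> nat \<Rightarrow> (pr option, 'k) ncp \<Rightarrow> (pr option, 'k) ncp \<Rightarrow> bool" where
  "Qeq _ n p q \<longleftrightarrow> ncsub p q \<in> ncideal (Qrels n)"

definition Ppoly :: "nat \<Rightarrow> (pr option, 'k::field) ncp" where
  "Ppoly n = ncprod (map (\<lambda>k. ncsub tvar (xr ({1..<k}, k))) (rev [1..<n+1]))"

definition defining :: "'k::field itself \<Rightarrow> nat \<Rightarrow> pr set \<Rightarrow> bool" where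
  "defining K n Y \<longleftrightarrow> (\<forall>y\<in>Y. pseudo_root n y) \<and>
     (\<exists>ys. length ys = n \<and> set ys \<subseteq> Y \<and>
        Qeq K n (ncprod (map (\<lambda>y. ncsub tvar (xr y)) (rev ys))) (Ppoly n))"

definition uop :: "'k::field itself \<Rightarrow> nat \<Rightarrow> pr \<Rightarrow> pr \<Rightarrow> pr \<Rightarrow> bool" where
  "uop K n a b \<xi> \<longleftrightarrow> pseudo_root n a \<and> pseudo_root n b \<and> pseudo_root n \<xi> \<and> a \<noteq> b \<and>
     fst a = fst b \<and>
     Qeq K n (ncmul (ncsub (xr a) (xr b)) (xr a)) (ncmul (xr \<xi>) (ncsub (xr a) (xr b)))"

definition dop :: "'k::field itself \<Rightarrow> nat \<Rightarrow> pr \<Rightarrow> pr \<Rightarrow> pr \<Rightarrow> bool" where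
  "dop K n a b \<eta> \<longleftrightarrow> pseudo_root n a \<and> pseudo_root n b \<and> pseudo_root n \<eta> \<and> a \<noteq> b \<and>
     insert (snd a) (fst a) = insert (snd b) (fst b) \<and>
     Qeq K n (ncmul (ncsub (xr a) (xr b)) (xr \<eta>)) (ncmul (xr a) (ncsub (xr a) (xr b)))"

inductive_set du_env :: "'k::field itself \<Rightarrow> nat \<Rightarrow> pr set \<Rightarrow> pr set" for K n Z where
  base: "z \<in> Z \<Longrightarrow> z \<in> du_env K n Z"
| u: "a \<in> du_env K n Z \<Longrightarrow> b \<in> du_env K n Z \<Longrightarrow> uop K n a b \<xi> \<Longrightarrow> \<xi> \<in> du_env K n Z"
| d: "a \<in> du_env K n Z \<Longrightarrow> b \<in> du_env K n Z \<Longrightarrow> dop K n a b \<eta> \<Longrightarrow> \<eta> \<in> du_env K n Z"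

definition sufficient :: "'k::field itself \<Rightarrow> nat \<Rightarrow> pr set \<Rightarrow> bool" where
  "sufficient K n Z \<longleftrightarrow> (\<exists>Y. Y \<subseteq> du_env K n Z \<and> defining K n Y)"

end

theory Submission
  imports Defs
begin

lemma nc_lunit: "ncmul (ncword []) p = (p :: ('g,'k::field) ncp)"
proof (rule ext)
  fix w :: "'g list"
  have "(\<Sum>i\<le>length w. ncword [] (take i w) * p (drop i w))
      = ncword [] (take 0 w) * p (drop 0 w) + (\<Sum>i<length w. ncword [] (take (Suc i) w) * p (drop (Suc i) w))"
    by (rule sum.atMost_shift)
  also have "\<dots> = p w" by (simp add: ncword_def)
  finally show "ncmul (ncword []) p w = p w" by (simp add: ncmul_def)
qed

lemma nc_runit: "ncmul p (ncword []) = (p :: ('g,'k::field) ncp)"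
proof (rule ext)
  fix w :: "'g list"
  have "(\<Sum>i\<le>length w. p (take i w) * ncword [] (drop i w))
      = (\<Sum>i<length w. p (take i w) * ncword [] (drop i w)) + p (take (length w) w) * ncword [] (drop (length w) w)"
    by (simp add: lessThan_Suc_atMost[symmetric])
  also have "\<dots> = p w" by (simp add: ncword_def)
  finally show "ncmul p (ncword []) w = p w" by (simp add: ncmul_def)
qed

lemma nc_add_left: "ncmul (ncadd p q) r = ncadd (ncmul p r) (ncmul q (r::('g,'k::field) ncp))"
  by (rule ext) (simp add: ncmul_def ncadd_def distrib_right sum.distrib)
lemma nc_sub_left: "ncmul (ncsub p q) r = ncsub (ncmul p r) (ncmul q (r::('g,'k::field) ncp))"
  by (rule ext) (simp add: ncmul_def ncsub_def left_diff_distrib sum_subtractf)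
lemma nc_add_right: "ncmul r (ncadd p q) = ncadd (ncmul r p) (ncmul r (q::('g,'k::field) ncp))"
  by (rule ext) (simp add: ncmul_def ncadd_def distrib_left sum.distrib)
lemma nc_sub_right: "ncmul r (ncsub p q) = ncsub (ncmul r p) (ncmul r (q::('g,'k::field) ncp))"
  by (rule ext) (simp add: ncmul_def ncsub_def right_diff_distrib sum_subtractf)

lemma id_sub: "p \<in> ncideal R \<Longrightarrow> q \<in> ncideal R \<Longrightarrow> ncsub p q \<in> ncideal R"
proof -
  assume "p \<in> ncideal R" "q \<in> ncideal R"
  hence "ncadd p (ncsmul (-1) q) \<in> ncideal R" by (intro ncideal.add ncideal.smul)
  moreover have "ncadd p (ncsmul (-1) q) = ncsub p q"
    by (rule ext) (simp add: ncadd_def ncsmul_def ncsub_def)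
  ultimately show ?thesis by simp
qed

lemma id_rmul: "p \<in> ncideal R \<Longrightarrow> ncmul p (xr a) \<in> ncideal R"
  using ncideal.mult[of p R "[]" "[Some a]"] by (simp add: nc_lunit xr_def ncgen_def)

lemma id_lmul: "p \<in> ncideal R \<Longrightarrow> ncmul (xr a) p \<in> ncideal R"
  using ncideal.mult[of p R "[Some a]" "[]"] by (simp add: nc_runit xr_def ncgen_def)

lemma Qeq_refl: "Qeq K n p p"
  unfolding Qeq_def
proof -
  have "ncsub p p = (\<lambda>w. 0)" by (rule ext) (simp add: ncsub_def)
  thus "ncsub p p \<in> ncideal (Qrels n)" by (simp add: ncideal.zero)
qed

lemma R1: "A \<subseteq> {1..n} \<Longrightarrow> i \<in> {1..n} \<Longrightarrow> j \<in> {1..n} \<Longrightarrow> i \<noteq> j \<Longrightarrow> i \<notin> A \<Longrightarrow> j \<notin> A \<Longrightarrow>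
  ncsub (ncadd (xr (insert i A, j)) (xr (A, i))) (ncadd (xr (insert j A, i)) (xr (A, j))) \<in> ncideal (Qrels n :: (pr option,'k::field) ncp set)"
  by (rule ncideal.gen) (unfold Qrels_def, blast)

lemma R2: "A \<subseteq> {1..n} \<Longrightarrow> i \<in> {1..n} \<Longrightarrow> j \<in> {1..n} \<Longrightarrow> i \<noteq> j \<Longrightarrow> i \<notin> A \<Longrightarrow> j \<notin> A \<Longrightarrow>
  ncsub (ncmul (xr (insert i A, j)) (xr (A, i))) (ncmul (xr (insert j A, i)) (xr (A, j))) \<in> ncideal (Qrels n :: (pr option,'k::field) ncp set)"
  by (rule ncideal.gen) (unfold Qrels_def, blast)

lemma uop_step:
  assumes "A \<subseteq> {1..n}" "i \<in> {1..n}" "j \<in> {1..n}" "i \<noteq> j" "i \<notin> A" "j \<notin> A"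
  shows "uop TYPE('k::field) n (A,i) (A,j) (insert j A, i)"
proof -
  let ?R1 = "ncsub (ncadd (xr (insert i A, j)) (xr (A, i))) (ncadd (xr (insert j A, i)) (xr (A, j))) :: (pr option,'k) ncp"
  let ?R2 = "ncsub (ncmul (xr (insert i A, j)) (xr (A, i))) (ncmul (xr (insert j A, i)) (xr (A, j))) :: (pr option,'k) ncp"
  have "ncsub (ncmul ?R1 (xr (A,i))) ?R2 \<in> ncideal (Qrels n)"
    using R1[OF assms, where 'k='k] R2[OF assms, where 'k='k] by (blast intro: id_sub id_rmul)
  moreover have "ncsub (ncmul (ncsub (xr (A,i)) (xr (A,j))) (xr (A,i))) (ncmul (xr (insert j A, i)) (ncsub (xr (A,i)) (xr (A,j))))
     = ncsub (ncmul ?R1 (xr (A,i))) ?R2"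
    by (simp only: nc_sub_left nc_sub_right nc_add_left nc_add_right)
       (rule ext, simp add: ncsub_def ncadd_def algebra_simps)
  ultimately show ?thesis using assms
    by (auto simp: uop_def Qeq_def pseudo_root_def)
qed

lemma dop_step:
  assumes "A \<subseteq> {1..n}" "i \<in> {1..n}" "j \<in> {1..n}" "i \<noteq> j" "i \<notin> A" "j \<notin> A"
  shows "dop TYPE('k::field) n (insert j A,i) (insert i A,j) (A, i)"
proof -
  let ?R1 = "ncsub (ncadd (xr (insert i A, j)) (xr (A, i))) (ncadd (xr (insert j A, i)) (xr (A, j))) :: (pr option,'k) ncp"
  let ?R2 = "ncsub (ncmul (xr (insert i A, j)) (xr (A, i))) (ncmul (xr (insert j A, i)) (xr (A, j))) :: (pr option,'k) ncp"
  have "ncsub (ncmul (xr (insert j A,i)) ?R1) ?R2 \<in> ncideal (Qrels n)"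
    using R1[OF assms, where 'k='k] R2[OF assms, where 'k='k] by (blast intro: id_sub id_lmul)
  moreover have "ncsub (ncmul (ncsub (xr (insert j A,i)) (xr (insert i A,j))) (xr (A,i)))
        (ncmul (xr (insert j A,i)) (ncsub (xr (insert j A,i)) (xr (insert i A,j))))
     = ncsub (ncmul (xr (insert j A,i)) ?R1) ?R2"
    by (simp only: nc_sub_left nc_sub_right nc_add_left nc_add_right)
       (rule ext, simp add: ncsub_def ncadd_def algebra_simps)
  ultimately show ?thesis using assms
    by (auto simp: dop_def Qeq_def pseudo_root_def insert_commute)
qed


lemma env1:
  assumes "finite A"
  shows "A \<subseteq> {1..n} \<Longrightarrow> i \<in> {1..n} \<Longrightarrow> i \<notin> A \<Longrightarrow>
     (A,i) \<in> du_env TYPE('k::field) n {({}, k) | k. k \<in> {1..n}}"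
  using assms
proof (induction A arbitrary: i rule: finite_induct)
  case empty
  then show ?case by (auto intro: du_env.base)
next
  case (insert j A)
  have a: "(A,i) \<in> du_env TYPE('k) n {({}, k) | k. k \<in> {1..n}}" using insert by auto
  have b: "(A,j) \<in> du_env TYPE('k) n {({}, k) | k. k \<in> {1..n}}" using insert by auto
  have "uop TYPE('k) n (A,i) (A,j) (insert j A, i)"
    using insert by (intro uop_step) auto
  then show ?case by (rule du_env.u[OF a b])
qed

lemma env2:
  "\<forall>A i. card ({1..n} - A - {i}) = m \<longrightarrow> A \<subseteq> {1..n} \<longrightarrow> i \<in> {1..n} \<longrightarrow> i \<notin> A \<longrightarrow>
     (A,i) \<in> du_env TYPE('k::field) n {({1..n} - {k}, k) | k. k \<in> {1..n}}"
proof (induction m rule: less_induct)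
  case (less m)
  show ?case
  proof (intro allI impI)
    fix A i assume c: "card ({1..n} - A - {i}) = m" and h: "A \<subseteq> {1..n}" "i \<in> {1..n}" "i \<notin> A"
    show "(A,i) \<in> du_env TYPE('k::field) n {({1..n} - {k}, k) | k. k \<in> {1..n}}"
    proof (cases "{1..n} - A - {i} = {}")
      case True
      then have "A = {1..n} - {i}" using h by blast
      then show ?thesis using h by (auto intro: du_env.base)
    next
      case False
      then obtain j where j: "j \<in> {1..n} - A - {i}" by blast
      have "card ({1..n} - insert j A - {i}) < m"
        using c j by (metis Diff_insert card_Diff1_less finite_Diff finite_atLeastAtMost insert_Diff1 singletonD Diff_insert2)
      then have a: "(insert j A,i) \<in> du_env TYPE('k::field) n {({1..n} - {k}, k) | k. k \<in> {1..n}}"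
        using less h j by auto
      have "{1..n} - insert i A - {j} = ({1..n} - A - {i}) - {j}" by auto
      then have "card ({1..n} - insert i A - {j}) < m"
        using c j by (metis card_Diff1_less finite_Diff finite_atLeastAtMost)
      then have b: "(insert i A,j) \<in> du_env TYPE('k::field) n {({1..n} - {k}, k) | k. k \<in> {1..n}}"
        using less h j by auto
      have "dop TYPE('k) n (insert j A,i) (insert i A,j) (A, i)"
        using h j by (intro dop_step) auto
      then show ?thesis by (rule du_env.d[OF a b])
    qed
  qed
qed

lemma defY: "defining TYPE('k::field) n {({1..<k},k) | k. k \<in> {1..n}}"
  unfolding defining_def
proof (intro conjI)
  show "\<forall>y\<in>{({1..<k},k) | k. k \<in> {1..n}}. pseudo_root n y"
    by (auto simp: pseudo_root_def)
  show "\<exists>ys. length ys = n \<and> set ys \<subseteq> {({1..<k},k) | k. k \<in> {1..n}} \<and>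
        Qeq TYPE('k) n (ncprod (map (\<lambda>y. ncsub tvar (xr y)) (rev ys))) (Ppoly n)"
  proof (intro exI conjI)
    let ?ys = "map (\<lambda>k. ({1..<k},k)) [1..<n+1]"
    show "length ?ys = n" by simp
    show "set ?ys \<subseteq> {({1..<k},k) | k. k \<in> {1..n}}" by auto
    have e: "map (\<lambda>y. ncsub tvar (xr y)) (rev ?ys) = map (\<lambda>k. ncsub tvar (xr ({1..<k}, k) :: (pr option,'k) ncp)) (rev [1..<n+1])"
      by (simp only: rev_map map_map o_def)
    show "Qeq TYPE('k) n (ncprod (map (\<lambda>y. ncsub tvar (xr y)) (rev ?ys))) (Ppoly n)"
      unfolding Ppoly_def e by (rule Qeq_refl)
  qed
qed

theorem proposition1p4p4:
  fixes n :: nat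
  shows "sufficient TYPE('k::field) n {({}, k) | k. k \<in> {1..n}} \<and>
         sufficient TYPE('k::field) n {({1..n} - {k}, k) | k. k \<in> {1..n}}"
  unfolding sufficient_def
proof (intro conjI exI[of _ "{({1..<k},k) | k. k \<in> {1..n}}"] defY)
  show "{({1..<k},k) | k. k \<in> {1..n}} \<subseteq> du_env TYPE('k) n {({}, k) | k. k \<in> {1..n}}"
  proof
    fix y assume "y \<in> {({1..<k},k) | k. k \<in> {1..n}}"
    then obtain k where "y = ({1..<k},k)" "k \<in> {1..n}" by auto
    then show "y \<in> du_env TYPE('k) n {({}, k) | k. k \<in> {1..n}}"
      using env1[of "{1..<k}" n k, where 'k='k] by (simp add: subset_iff)
  qed
  show "{({1..<k},k) | k. k \<in> {1..n}} \<subseteq> du_env TYPE('k) n {({1..n} - {k}, k) | k. k \<in> {1..n}}"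
  proof
    fix y assume "y \<in> {({1..<k},k) | k. k \<in> {1..n}}"
    then obtain k where "y = ({1..<k},k)" "k \<in> {1..n}" by auto
    then show "y \<in> du_env TYPE('k) n {({1..n} - {k}, k) | k. k \<in> {1..n}}"
    proof -
      have s: "{1..<k} \<subseteq> {1..n}" using \<open>k \<in> {1..n}\<close> by (simp add: subset_iff)
      have "k \<notin> {1..<k}" by simp
      then show ?thesis
        using env2[of n "card ({1..n} - {1..<k} - {k})", where 'k='k] s \<open>k \<in> {1..n}\<close> \<open>y = ({1..<k},k)\<close>
        by blast
    qed
  qed
qed

end
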